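(* Let $(A,B)$ be a Katsura pair, with associated action $\phi_{A,B}:\mathbb{Z}\times E_A^0\to\operatorname{PIso}(E_A^* )$. Then $a_i^k\in\ker(\phi_{A,B})$ if and only if $\frac{kB_\mu}{A_\mu}\in\mathbb{Z}$ for all $\mu\in iE_A^*$.
   Context: Katsura pair: $N\in\mathbb{N}$, $A\in M_N(\mathbb{N})$ (nonnegative integers), $B\in M_N(\mathbb{Z})$ with $A_{ij}=0\Rightarrow B_{ij}=0$. Graph $E_A$: vertices $\{1,\dots,N\}$, edges $e_{i,j,m}$ ($0\le m<A_{ij}$), $r(e_{i,j,m})=i$, $s(e_{i,j,m})=j$. Finite paths $\mu_1\cdots\mu_n$ with $s(\mu_t)=r(\mu_{t+1})$ (vertices are paths of length 0); $iE_A^*$ are the finite paths with range $i$. For $\mu=e_{i_0,i_1,r_1}\cdots e_{i_{n-1},i_n,r_n}$, $A_\mu=\prod_{t=0}^{n-1}A_{i_ti_{t+1}}$ and $B_\mu=\prod_{t=0}^{n-1}B_{i_ti_{t+1}}$ (empty product $=1$). The group bundle $\mathbb{Z}\times E_A^0$ has elements $a_i^k$ ($k\in\mathbb{Z}$, $i$ a vertex) with $a_i^ka_i^l=a_i^{k+l}$. It acts by $a_i^k\cdot e_{i,j,m}=e_{i,j,\hat m}$, $a_i^k|_{e_{i,j,m}}=a_j^{\hat k}$ where $kB_{ij}+m=\hat kA_{ij}+\hat m$, $0\le\hat m<A_{ij}$, extended to paths by $g\cdot(e\nu)=(g\cdot e)(g|_e\cdot\nu)$; $\phi_{A,B}(a_i^k)$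 is the resulting bijection of $iE_A^*$. $\ker(\phi_{A,B})$ is the set of $a_i^k$ acting as the identity on $iE_A^*$. *)

theory Defs
  imports Complex_Main
begin

definition katsura_pair :: "nat \<Rightarrow> (nat \<Rightarrow> nat \<Rightarrow> nat) \<Rightarrow> (nat \<Rightarrow> nat \<Rightarrow> int) \<Rightarrow> bool" where
  "katsura_pair N A B \<longleftrightarrow> (\<forall>i\<in>{1..N}. \<forall>j\<in>{1..N}. A i j = 0 \<longrightarrow> B i j = 0)"

text \<open>Edge e_{i,j,m} is the triple (i,j,m); range i, source j.\<close>
definition is_edge :: "nat \<Rightarrow> (nat \<Rightarrow> nat \<Rightarrow> nat) \<Rightarrow> nat \<times> nat \<times> nat \<Rightarrow> bool" where
  "is_edge N A e = (case e of (i, j, m) \<Rightarrow> i \<in> {1..N} \<and> j \<in> {1..N} \<and> m < A i j)"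

text \<open>A finite path with range i, given as its list of edges (empty list = vertex i).\<close>
fun path_from :: "nat \<Rightarrow> (nat \<Rightarrow> nat \<Rightarrow> nat) \<Rightarrow> nat \<Rightarrow> (nat \<times> nat \<times> nat) list \<Rightarrow> bool" where
  "path_from N A i [] = (i \<in> {1..N})"
| "path_from N A i ((i', j, m) # rest) =
     (i' = i \<and> is_edge N A (i', j, m) \<and> path_from N A j rest)"

definition paths_at :: "nat \<Rightarrow> (nat \<Rightarrow> nat \<Rightarrow> nat) \<Rightarrow> nat \<Rightarrow> (nat \<times> nat \<times> nat) list set" where
  "paths_at N A i = {\<mu>. path_from N A i \<mu>}"

fun katsura_act :: "(nat \<Rightarrow> nat \<Rightarrow> nat) \<Rightarrow> (nat \<Rightarrow> nat \<Rightarrow> int) \<Rightarrow> int \<Rightarrow> (nat \<times> nat \<times> nat) list \<Rightarrow> (nat \<times> nat \<times> nat) list" where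
  "katsura_act A B k [] = []"
| "katsura_act A B k ((i, j, m) # rest) =
     (let t = k * B i j + int m
      in (i, j, nat (t mod int (A i j))) # katsura_act A B (t div int (A i j)) rest)"

definition in_kernel :: "nat \<Rightarrow> (nat \<Rightarrow> nat \<Rightarrow> nat) \<Rightarrow> (nat \<Rightarrow> nat \<Rightarrow> int) \<Rightarrow> nat \<Rightarrow> int \<Rightarrow> bool" where
  "in_kernel N A B i k \<longleftrightarrow> (\<forall>\<mu>\<in>paths_at N A i. katsura_act A B k \<mu> = \<mu>)"

definition A_path :: "(nat \<Rightarrow> nat \<Rightarrow> nat) \<Rightarrow> (nat \<times> nat \<times> nat) list \<Rightarrow> nat" where
  "A_path A \<mu> = prod_list (map (\<lambda>(i, j, m). A i j) \<mu>)"

definition B_path :: "(nat \<Rightarrow> nat \<Rightarrow> int) \<Rightarrow> (nat \<times> nat \<times> nat) list \<Rightarrow> int" where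
  "B_path B \<mu> = prod_list (map (\<lambda>(i, j, m). B i j) \<mu>)"

end

theory Submission
  imports Defs
begin

lemma rat_int_iff:
  assumes "a > 0"
  shows "((of_int x / of_nat a :: rat) \<in> \<int>) \<longleftrightarrow> int a dvd x"
proof
  assume "(of_int x / of_nat a :: rat) \<in> \<int>"
  then obtain z where z: "(of_int x / of_nat a :: rat) = of_int z" by (auto elim: Ints_cases)
  then have "(of_int x :: rat) = of_int z * of_nat a" using assms by (simp add: field_simps)
  then have "x = z * int a" by (metis of_int_eq_iff of_int_mult of_int_of_nat_eq)
  then show "int a dvd x" by simp
next
  assume "int a dvd x"
  then obtain c where "x = int a * c" by blast
  then show "(of_int x / of_nat a :: rat) \<in> \<int>" using assms by simp
qed

lemma act_fix_iff:
  assumes "list_all (\<lambda>(i,j,m). m < A i j) \<mu>"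
  shows "katsura_act A B k \<mu> = \<mu> \<longleftrightarrow>
    (\<forall>p \<le> length \<mu>. int (A_path A (take p \<mu>)) dvd k * B_path B (take p \<mu>))"
  using assms
proof (induction \<mu> arbitrary: k)
  case Nil
  then show ?case by (simp add: A_path_def B_path_def)
next
  case (Cons e rest)
  obtain i j m where e: "e = (i,j,m)" by (cases e) auto
  define a where "a = A i j"
  define b where "b = B i j"
  have ma: "m < a" using Cons.prems e a_def by simp
  have lr: "list_all (\<lambda>(i,j,m). m < A i j) rest" using Cons.prems by simp
  define t where "t = k * b + int m"
  have apos: "int a > 0" using ma by simp
  have modiff: "nat (t mod int a) = m \<longleftrightarrow> int a dvd k * b"
  proof
    assume h: "nat (t mod int a) = m"
    have "t mod int a = int m" using h apos by (metis int_nat_eq pos_mod_sign)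
    then have "(t - int m) mod int a = 0" by (metis diff_self mod_0 mod_diff_left_eq)
    then show "int a dvd k * b" unfolding t_def by (simp add: dvd_eq_mod_eq_0)
  next
    assume "int a dvd k * b"
    then have "t mod int a = int m mod int a" unfolding t_def
      by (metis mod_add_left_eq dvd_imp_mod_0 add.left_neutral)
    also have "\<dots> = int m" using ma by simp
    finally show "nat (t mod int a) = m" by simp
  qed
  have lhs: "katsura_act A B k (e # rest) = e # rest \<longleftrightarrow>
     nat (t mod int a) = m \<and> katsura_act A B (t div int a) rest = rest"
    by (simp add: e t_def a_def b_def Let_def)
  have rhs: "(\<forall>p \<le> length (e # rest). int (A_path A (take p (e#rest))) dvd k * B_path B (take p (e#rest)))
     \<longleftrightarrow> (\<forall>q \<le> length rest. int a * int (A_path A (take q rest)) dvd k * b * B_path B (take q rest))"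
  proof -
    have "(\<forall>p \<le> length (e # rest). P p) \<longleftrightarrow> P 0 \<and> (\<forall>q \<le> length rest. P (Suc q))" for P
      by (metis Suc_le_mono le_0_eq length_Cons not0_implies_Suc zero_le)
    moreover have "A_path A (take (Suc q) (e#rest)) = a * A_path A (take q rest)" for q
      by (simp add: A_path_def e a_def)
    moreover have "B_path B (take (Suc q) (e#rest)) = b * B_path B (take q rest)" for q
      by (simp add: B_path_def e b_def)
    moreover have "A_path A [] = 1" "B_path B [] = 1" by (simp_all add: A_path_def B_path_def)
    ultimately show ?thesis by (simp add: mult.assoc)
  qed
  show ?case
  proof (cases "int a dvd k * b")
    case True
    then obtain c where c: "k * b = int a * c" by blast
    have td: "t div int a = c" unfolding t_def c using ma apos by simp
    have "(\<forall>q \<le> length rest. int a * int (A_path A (take q rest)) dvd k * b * B_path B (take q rest))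
      \<longleftrightarrow> (\<forall>q \<le> length rest. int (A_path A (take q rest)) dvd c * B_path B (take q rest))"
      using apos by (simp add: c mult.assoc)
    then show ?thesis using lhs rhs modiff True td Cons.IH[OF lr] by simp
  next
    case False
    have "\<not> (\<forall>q \<le> length rest. int a * int (A_path A (take q rest)) dvd k * b * B_path B (take q rest))"
      using False by (auto dest: spec[of _ 0] simp: A_path_def B_path_def)
    then show ?thesis using lhs rhs modiff False by simp
  qed
qed

lemma path_start: "path_from N A i \<mu> \<Longrightarrow> i \<in> {1..N}"
  by (induction \<mu> arbitrary: i) (auto simp: is_edge_def)

lemma path_take: "path_from N A i \<mu> \<Longrightarrow> path_from N A i (take p \<mu>)"
proof (induction \<mu> arbitrary: i p)
  case Nil then show ?case by simp
next
  case (Cons e rest)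
  obtain i' j m where e: "e = (i',j,m)" by (cases e) auto
  show ?case
  proof (cases p)
    case 0 then show ?thesis using path_start[OF Cons.prems] by simp
  next
    case (Suc q) then show ?thesis using Cons e by auto
  qed
qed

lemma path_lt: "path_from N A i \<mu> \<Longrightarrow> list_all (\<lambda>(i,j,m). m < A i j) \<mu>"
  by (induction \<mu> arbitrary: i) (auto simp: is_edge_def)

lemma path_Apos: "list_all (\<lambda>(i,j,m). m < A i j) \<mu> \<Longrightarrow> A_path A \<mu> > 0"
  by (induction \<mu>) (auto simp: A_path_def)

theorem proposition3p1:
  fixes N :: nat and A :: "nat \<Rightarrow> nat \<Rightarrow> nat" and B :: "nat \<Rightarrow> nat \<Rightarrow> int"
    and i :: nat and k :: int
  assumes "katsura_pair N A B" and "i \<in> {1..N}"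
  shows "in_kernel N A B i k \<longleftrightarrow>
    (\<forall>\<mu>\<in>paths_at N A i.
       (of_int (k * B_path B \<mu>) / of_nat (A_path A \<mu>) :: rat) \<in> \<int>)"
proof -
  have conv: "(of_int (k * B_path B \<mu>) / of_nat (A_path A \<mu>) :: rat) \<in> \<int> \<longleftrightarrow>
      int (A_path A \<mu>) dvd k * B_path B \<mu>" if "\<mu> \<in> paths_at N A i" for \<mu>
  proof -
    have "A_path A \<mu> > 0" using path_Apos path_lt that by (simp add: paths_at_def)
    then show ?thesis using rat_int_iff[of "A_path A \<mu>" "k * B_path B \<mu>"] by simp
  qed
  show ?thesis
  proof
    assume h: "in_kernel N A B i k"
    show "\<forall>\<mu>\<in>paths_at N A i. (of_int (k * B_path B \<mu>) / of_nat (A_path A \<mu>) :: rat) \<in> \<int>"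
    proof
      fix \<mu> assume m: "\<mu> \<in> paths_at N A i"
      have "katsura_act A B k \<mu> = \<mu>" using h m by (simp add: in_kernel_def)
      moreover have "list_all (\<lambda>(i,j,m). m < A i j) \<mu>" using m path_lt by (simp add: paths_at_def)
      ultimately have "\<forall>p \<le> length \<mu>. int (A_path A (take p \<mu>)) dvd k * B_path B (take p \<mu>)"
        using act_fix_iff by blast
      then have "int (A_path A (take (length \<mu>) \<mu>)) dvd k * B_path B (take (length \<mu>) \<mu>)"
        by blast
      then show "(of_int (k * B_path B \<mu>) / of_nat (A_path A \<mu>) :: rat) \<in> \<int>"
        using conv[OF m] by simp
    qed
  next
    assume h: "\<forall>\<mu>\<in>paths_at N A i. (of_int (k * B_path B \<mu>) / of_nat (A_path A \<mu>) :: rat) \<in> \<int>"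
    show "in_kernel N A B i k" unfolding in_kernel_def
    proof
      fix \<mu> assume m: "\<mu> \<in> paths_at N A i"
      have "\<forall>p \<le> length \<mu>. int (A_path A (take p \<mu>)) dvd k * B_path B (take p \<mu>)"
      proof (intro allI impI)
        fix p assume "p \<le> length \<mu>"
        have tm: "take p \<mu> \<in> paths_at N A i" using m path_take by (simp add: paths_at_def)
        show "int (A_path A (take p \<mu>)) dvd k * B_path B (take p \<mu>)"
          using h tm conv[OF tm] by simp
      qed
      moreover have "list_all (\<lambda>(i,j,m). m < A i j) \<mu>" using m path_lt by (simp add: paths_at_def)
      ultimately show "katsura_act A B k \<mu> = \<mu>"
        using act_fix_iff by blast
    qed
  qed
qed

end
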